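(* Let $\rho\in\mathcal{D}(\mathcal{H})$ be a fixed density matrix. Then the function $\sigma\mapsto S(\rho\,\|\,\sigma)$ is $\lambda_{\max}(\rho)$-smooth and $\lambda_{\min}(\rho)$-strongly convex relative to the negative log determinant $\sigma\mapsto-\log\det(\sigma)$ on $\mathcal{D}(\mathcal{H})$.
   Context: $\mathcal{D}(\mathcal{H})$ is the set of positive semidefinite unit-trace Hermitian operators on $\mathcal{H}\cong\mathbb{C}^n$; $S(\rho\|\sigma)=\operatorname{tr}[\rho(\log\rho-\log\sigma)]$ is the quantum relative entropy. A function $g$ is $L$-smooth (resp. $\mu$-strongly convex) relative to $\varphi$ on $\mathcal{C}$ if $L\varphi-g$ (resp. $g-\mu\varphi$) is convex on the relative interior of $\mathcal{C}$ (here, the positive definite density matrices). *)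

theory Defs
  imports "HOL-Analysis.Analysis"
begin

text \<open>Complex n x n matrices are modelled as complex^'n^'n for a finite index type 'n
  (so H = C^n with n = CARD('n)).\<close>

definition cadj :: "complex^'n^'n \<Rightarrow> complex^'n^'n" where
  "cadj A = (\<chi> i j. cnj (A $ j $ i))"

definition hermitian :: "complex^'n^'n \<Rightarrow> bool" where
  "hermitian A \<longleftrightarrow> cadj A = A"

definition unitary :: "complex^'n^'n \<Rightarrow> bool" where
  "unitary U \<longleftrightarrow> cadj U ** U = mat 1"

definition cquad :: "complex^'n^'n \<Rightarrow> complex^'n \<Rightarrow> complex" where
  "cquad A v = (\<Sum>i\<in>UNIV. cnj (v $ i) * (A *v v) $ i)"

definition psd :: "complex^'n^'n \<Rightarrow> bool" where
  "psd A \<longleftrightarrow> hermitian A \<and> (\<forall>v. cquad A v \<in> \<real> \<and> Re (cquad A v) \<ge> 0)"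

definition posdef :: "complex^'n^'n \<Rightarrow> bool" where
  "posdef A \<longleftrightarrow> hermitian A \<and> (\<forall>v. v \<noteq> 0 \<longrightarrow> cquad A v \<in> \<real> \<and> Re (cquad A v) > 0)"

definition density :: "complex^'n^'n \<Rightarrow> bool" where
  "density A \<longleftrightarrow> psd A \<and> trace A = 1"

text \<open>Relative interior of D(H): positive definite density matrices.\<close>
definition density_pd :: "(complex^'n^'n) set" where
  "density_pd = {A. posdef A \<and> trace A = 1}"

definition cdiag :: "('n \<Rightarrow> real) \<Rightarrow> complex^'n^'n" where
  "cdiag d = (\<chi> i j. if i = j then complex_of_real (d i) else 0)"

text \<open>Matrix logarithm of a positive semidefinite matrix via the spectral decomposition
  A = U diag(d) U*, taking log on the support (log of zero eigenvalues set to 0, i.e.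
  the usual convention 0 log 0 = 0 in tr[rho log rho]).\<close>
definition mlog :: "complex^'n^'n \<Rightarrow> complex^'n^'n" where
  "mlog A = (SOME L. \<exists>U d. unitary U \<and> (\<forall>i. d i \<ge> 0) \<and> A = U ** cdiag d ** cadj U \<and>
       L = U ** cdiag (\<lambda>i. if d i > 0 then ln (d i) else 0) ** cadj U)"

definition qrel_entropy :: "complex^'n^'n \<Rightarrow> complex^'n^'n \<Rightarrow> real" where
  "qrel_entropy \<rho> \<sigma> = Re (trace (\<rho> ** (mlog \<rho> - mlog \<sigma>)))"

text \<open>Real eigenvalues (Hermitian matrices have only real eigenvalues).\<close>
definition real_eigenvalues :: "complex^'n^'n \<Rightarrow> real set" where
  "real_eigenvalues A = {r. \<exists>v. v \<noteq> 0 \<and> A *v v = complex_of_real r *s v}"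

definition lambda_max :: "complex^'n^'n \<Rightarrow> real" where
  "lambda_max A = Max (real_eigenvalues A)"

definition lambda_min :: "complex^'n^'n \<Rightarrow> real" where
  "lambda_min A = Min (real_eigenvalues A)"

definition neg_logdet :: "complex^'n^'n \<Rightarrow> real" where
  "neg_logdet \<sigma> = - ln (Re (det \<sigma>))"

definition rel_smooth :: "(complex^'n^'n) set \<Rightarrow> real \<Rightarrow> (complex^'n^'n \<Rightarrow> real) \<Rightarrow> (complex^'n^'n \<Rightarrow> real) \<Rightarrow> bool" where
  "rel_smooth C L g \<phi> \<longleftrightarrow> convex_on C (\<lambda>x. L * \<phi> x - g x)"

definition rel_strongly_convex :: "(complex^'n^'n) set \<Rightarrow> real \<Rightarrow> (complex^'n^'n \<Rightarrow> real) \<Rightarrow> (complex^'n^'n \<Rightarrow> real) \<Rightarrow> bool" where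
  "rel_strongly_convex C \<mu> g \<phi> \<longleftrightarrow> convex_on C (\<lambda>x. g x - \<mu> * \<phi> x)"

end

theory Submission
  imports Defs "HOL-Real_Asymp.Real_Asymp"
begin

definition cinner :: "complex^'n \<Rightarrow> complex^'n \<Rightarrow> complex" where
  "cinner x y = (\<Sum>i\<in>UNIV. cnj (x$i) * y$i)"

lemma cquad_cinner: "cquad A v = cinner v (A *v v)"
  by (simp add: cquad_def cinner_def)

lemma cinner_commute: "cinner y x = cnj (cinner x y)"
  by (simp add: cinner_def mult.commute)

lemma cinner_add_right: "cinner x (y + z) = cinner x y + cinner x z"
  by (simp add: cinner_def distrib_left sum.distrib)
lemma cinner_diff_right: "cinner x (y - z) = cinner x y - cinner x z"
  by (simp add: cinner_def right_diff_distrib sum_subtractf)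
lemma cinner_scale_right: "cinner x (c *s y) = c * cinner x y"
  by (simp add: cinner_def sum_distrib_left algebra_simps)
lemma cinner_add_left: "cinner (x + y) z = cinner x z + cinner y z"
  by (simp add: cinner_def distrib_right sum.distrib)
lemma cinner_diff_left: "cinner (x - y) z = cinner x z - cinner y z"
  by (simp add: cinner_def left_diff_distrib sum_subtractf)
lemma cinner_scale_left: "cinner (c *s x) y = cnj c * cinner x y"
  by (simp add: cinner_def sum_distrib_left algebra_simps)
lemma cinner_sum_right: "cinner x (sum f A) = (\<Sum>a\<in>A. cinner x (f a))"
  unfolding cinner_def by (simp add: sum_distrib_left sum.swap[of _ UNIV])
lemma cinner_zero_right[simp]: "cinner x 0 = 0" and cinner_zero_left[simp]: "cinner 0 x = 0"
  by (auto simp: cinner_def)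

lemma cadj_nth[simp]: "cadj A $ i $ j = cnj (A $ j $ i)"
  by (simp add: cadj_def)

lemma cinner_matrix: "cinner x (M *v y) = cinner (cadj M *v x) y"
proof -
  have "cinner x (M *v y) = (\<Sum>i\<in>UNIV. \<Sum>j\<in>UNIV. cnj (x$i) * M$i$j * y$j)"
    by (simp add: cinner_def matrix_vector_mult_def sum_distrib_left mult.assoc)
  also have "\<dots> = (\<Sum>j\<in>UNIV. \<Sum>i\<in>UNIV. cnj (x$i) * M$i$j * y$j)"
    by (rule sum.swap)
  also have "\<dots> = cinner (cadj M *v x) y"
    by (simp add: cinner_def matrix_vector_mult_def sum_distrib_right sum_distrib_left mult_ac)
  finally show ?thesis .
qed

lemma cadj_cadj[simp]: "cadj (cadj A) = A"
  by (simp add: cadj_def vec_eq_iff)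

lemma cadj_mult: "cadj (A ** B) = cadj B ** cadj A"
  by (simp add: cadj_def vec_eq_iff matrix_matrix_mult_def mult.commute)

lemma cadj_add: "cadj (A + B) = cadj A + cadj B"
  by (simp add: cadj_def vec_eq_iff)
lemma cadj_diff: "cadj (A - B) = cadj A - cadj B"
  by (simp add: cadj_def vec_eq_iff)
lemma cadj_scaleR: "cadj (c *\<^sub>R A) = c *\<^sub>R cadj A"
  by (simp add: vec_eq_iff)
lemma cadj_mat: "cadj (mat z) = mat (cnj z)"
  by (simp add: vec_eq_iff mat_def)
lemma cadj_cdiag: "cadj (cdiag d) = cdiag d"
  by (simp add: cadj_def vec_eq_iff cdiag_def)

lemma hermitian_cinner: "hermitian M \<Longrightarrow> cinner x (M *v y) = cinner (M *v x) y"
  by (simp add: hermitian_def cinner_matrix)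

lemma hermitian_cquad_real: "hermitian M \<Longrightarrow> cnj (cquad M v) = cquad M v"
  by (metis cinner_commute cquad_cinner hermitian_cinner)

lemma hermitian_cquad_Reals: "hermitian M \<Longrightarrow> cquad M v \<in> \<real>"
  using hermitian_cquad_real Reals_cnj_iff by blast

lemma cinner_self: "cinner x x = complex_of_real (\<Sum>i\<in>UNIV. (cmod (x$i))^2)"
  by (simp add: cinner_def of_real_sum complex_norm_square mult.commute del: of_real_power)

lemma norm_vec_sq: "(norm (x::complex^'n))^2 = (\<Sum>i\<in>UNIV. (cmod (x$i))^2)"
  by (simp add: norm_vec_def L2_set_def sum_nonneg)

lemma cinner_self_norm: "cinner x x = complex_of_real ((norm x)^2)"
  by (simp add: cinner_self norm_vec_sq)

lemma cinner_self_eq0: "cinner x x = 0 \<longleftrightarrow> x = 0"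
  by (simp add: cinner_self_norm)

lemma Re_cinner_self_ge0: "Re (cinner x x) \<ge> 0"
  by (simp add: cinner_self_norm)


lemma mv_scale: "A *v (c *s x) = c *s (A *v (x::complex^'n))"
  by (simp add: vec_eq_iff matrix_vector_mult_def sum_distrib_left mult_ac)

lemma mv_add: "A *v (x + y) = A *v x + A *v (y::complex^'n)"
  by (simp add: matrix_vector_right_distrib)

lemma mv_diff: "A *v (x - y) = A *v x - A *v (y::complex^'n)"
  by (simp add: vec_eq_iff matrix_vector_mult_def sum_subtractf right_diff_distrib)

lemma continuous_cinner_right: "continuous_on X (\<lambda>v. cinner s v)"
  unfolding cinner_def by (intro continuous_intros)

lemma continuous_cinner_self: "continuous_on X (\<lambda>v. cinner v v)"
  unfolding cinner_def by (intro continuous_intros)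

lemma continuous_cquad: "continuous_on X (\<lambda>v. Re (cquad A v))"
  unfolding cquad_def matrix_vector_mult_def by (intro continuous_intros)

lemma cquad_scale: "cquad A (c *s x) = cnj c * c * cquad A x"
  by (simp add: cquad_cinner mv_scale cinner_scale_left cinner_scale_right)

lemma norm_from_cinner: "cinner v v = 1 \<Longrightarrow> norm v = 1"
proof -
  assume "cinner v v = 1"
  then have "(norm v)^2 = 1" using cinner_self_norm[of v] by (metis of_real_eq_1_iff)
  then have "norm v = 1 \<or> norm v = -1" by (simp add: power2_eq_1_iff)
  then show "norm v = 1" using norm_ge_zero[of v] by linarith
qed

lemma rayleigh_eigen:
  fixes A :: "complex^'n^'n"
  assumes herm: "hermitian A"
    and eig: "\<forall>s\<in>S. \<exists>l::real. A *v s = complex_of_real l *s s"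
    and w: "w \<noteq> 0" "\<forall>s\<in>S. cinner s w = 0"
  shows "\<exists>v. cinner v v = 1 \<and> (\<forall>s\<in>S. cinner s v = 0) \<and> (\<exists>l::real. A *v v = complex_of_real l *s v)"
proof -
  define K where "K = {v. cinner v v = 1 \<and> (\<forall>s\<in>S. cinner s v = 0)}"
  have Kne: "K \<noteq> {}"
  proof -
    define n where "n = norm w"
    have n: "n > 0" using w by (simp add: n_def)
    define w' where "w' = complex_of_real (1/n) *s w"
    have "cinner w' w' = complex_of_real (1/n) * complex_of_real (1/n) * cinner w w"
      by (simp add: w'_def cinner_scale_left cinner_scale_right del: of_real_divide)
    also have "cinner w w = complex_of_real (n^2)" by (simp add: n_def cinner_self_norm)
    also have "complex_of_real (1/n) * complex_of_real (1/n) * complex_of_real (n^2) = complex_of_real ((1/n)^2 * n^2)"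
      by (simp only: of_real_mult of_real_power power2_eq_square)
    also have "\<dots> = 1"
    proof -
      have "(1/n)^2 * n^2 = (1::real)" using n by (simp add: field_simps)
      then show ?thesis by (simp only: of_real_1)
    qed
    finally have "w' \<in> K" using w by (simp add: K_def w'_def cinner_scale_right)
    then show ?thesis by blast
  qed
  have Kc: "compact K"
  unfolding compact_eq_bounded_closed
  proof
    show "bounded K" unfolding bounded_iff K_def using norm_from_cinner by (metis (mono_tags, lifting) mem_Collect_eq order_refl)
    have "K = {v. cinner v v = 1} \<inter> (\<Inter>s\<in>S. {v. cinner s v = 0})"
      by (auto simp: K_def)
    moreover have "closed {v. cinner v v = 1}"
      by (rule closed_Collect_eq[OF continuous_cinner_self continuous_on_const])
    moreover have "closed {v. cinner s v = 0}" for s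
      by (rule closed_Collect_eq[OF continuous_cinner_right continuous_on_const])
    ultimately show "closed K" by auto
  qed
  obtain v where vK: "v \<in> K" and vmax: "\<And>y. y \<in> K \<Longrightarrow> Re (cquad A y) \<le> Re (cquad A v)"
    using continuous_attains_sup[OF Kc Kne continuous_cquad] by blast
  define l where "l = Re (cquad A v)"
  have ql: "cquad A v = complex_of_real l"
    using hermitian_cquad_Reals[OF herm] by (simp add: l_def complex_is_Real_iff)
  have vv: "cinner v v = 1" and vS: "\<forall>s\<in>S. cinner s v = 0" using vK by (auto simp: K_def)
  define r where "r = A *v v - complex_of_real l *s v"
  have Av: "A *v v = r + complex_of_real l *s v" by (simp add: r_def)
  have SAv: "cinner s (A *v v) = 0" if sS: "s \<in> S" for s
  proof -
    obtain m :: real where m: "A *v s = complex_of_real m *s s" using bspec[OF eig sS] by (elim exE)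
    have "cinner s (A *v v) = cinner (A *v s) v" using hermitian_cinner[OF herm] by simp
    also have "\<dots> = 0" using vS sS by (simp add: m cinner_scale_left)
    finally show ?thesis .
  qed
  have rS: "\<forall>s\<in>S. cinner s r = 0"
    using SAv vS by (simp add: r_def cinner_diff_right cinner_scale_right)
  have vr: "cinner v r = 0"
    using vv ql by (simp add: r_def cinner_diff_right cinner_scale_right cquad_cinner)
  have rv: "cinner r v = 0" using vr cinner_commute[of r v] by simp
  have "r = 0"
  proof (rule ccontr)
    assume r0: "r \<noteq> 0"
    define a where "a = (norm r)^2"
    have a: "a > 0" using r0 by (simp add: a_def)
    have rr: "cinner r r = complex_of_real a" by (simp add: a_def cinner_self_norm)
    define b where "b = Re (cquad A r)"
    have qr: "cquad A r = complex_of_real b"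
      using hermitian_cquad_Reals[OF herm] by (simp add: b_def complex_is_Real_iff)
    define e where "e = a / (\<bar>l * a - b\<bar> + 1)"
    have e: "e > 0" using a by (simp add: e_def)
    define x where "x = v + complex_of_real e *s r"
    have rAv: "cinner r (A *v v) = complex_of_real a"
      by (simp add: Av cinner_add_right cinner_scale_right rr rv)
    have vAr: "cinner v (A *v r) = complex_of_real a"
      using hermitian_cinner[OF herm, of v r]
      by (simp add: Av cinner_add_left cinner_scale_left rr vr)
    have xx: "cinner x x = complex_of_real (1 + e^2 * a)"
      by (simp add: x_def cinner_add_left cinner_add_right cinner_scale_left cinner_scale_right
          vv vr rv rr power2_eq_square)
    have qx: "cquad A x = complex_of_real (l + 2 * e * a + e^2 * b)"
      using ql qr rAv vAr
      by (simp add: x_def cquad_cinner mv_add mv_scale cinner_add_left cinner_add_right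
          cinner_scale_left cinner_scale_right power2_eq_square algebra_simps)
    define c where "c = 1 / sqrt (1 + e^2 * a)"
    have pos: "1 + e^2 * a > 0" using a by (simp add: add_pos_nonneg)
    define y where "y = complex_of_real c *s x"
    have "cinner y y = complex_of_real (c^2 * (1 + e^2 * a))"
      by (simp add: y_def cinner_scale_left cinner_scale_right xx power2_eq_square)
    also have "c^2 * (1 + e^2 * a) = 1" using pos by (simp add: c_def power_divide)
    finally have yy: "cinner y y = 1" by simp
    have yS: "\<forall>s\<in>S. cinner s y = 0"
      using vS rS by (simp add: y_def x_def cinner_scale_right cinner_add_right)
    have "Re (cquad A y) = c^2 * (l + 2 * e * a + e^2 * b)"
      by (simp add: y_def cquad_scale qx power2_eq_square)
    also have "\<dots> = (l + 2 * e * a + e^2 * b) / (1 + e^2 * a)"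
      using pos by (simp add: c_def power_divide)
    finally have "(l + 2 * e * a + e^2 * b) / (1 + e^2 * a) \<le> l"
      using vmax[of y] yy yS by (simp add: K_def l_def)
    then have "l + 2 * e * a + e^2 * b \<le> l * (1 + e^2 * a)"
      using pos by (simp add: divide_le_eq)
    then have "e * (2 * a) \<le> e * (e * (l * a - b))"
      by (simp add: algebra_simps power2_eq_square)
    then have "2 * a \<le> e * (l * a - b)" using e by simp
    also have "\<dots> \<le> e * \<bar>l * a - b\<bar>" using e by (simp add: mult_left_mono)
    also have "\<dots> < a"
    proof -
      have "e * \<bar>l * a - b\<bar> = a * (\<bar>l * a - b\<bar> / (\<bar>l * a - b\<bar> + 1))" by (simp add: e_def)
      also have "\<dots> < a * 1" using a by (intro mult_strict_left_mono) auto
      finally show ?thesis by simp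
    qed
    finally show False using a by simp
  qed
  then have "A *v v = complex_of_real l *s v" using Av by simp
  then show ?thesis using vv vS by blast
qed


definition orthonormal :: "(complex^'n) set \<Rightarrow> bool" where
  "orthonormal S \<longleftrightarrow> (\<forall>x\<in>S. \<forall>y\<in>S. cinner x y = (if x = y then 1 else 0))"

lemma perp_exists:
  fixes S :: "(complex^'n) set"
  assumes fin: "finite S" and card: "card S < CARD('n)" and on: "orthonormal S"
  shows "\<exists>w. w \<noteq> 0 \<and> (\<forall>s\<in>S. cinner s w = 0)"
proof -
  have "vec.span S \<noteq> UNIV"
  proof
    assume "vec.span S = UNIV"
    then have "vec.dim (UNIV :: (complex^'n) set) \<le> card S"
      using vec.dim_le_card[of UNIV S] fin by simp
    then show False using card vec_dim_card by (metis not_le)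
  qed
  then obtain x where x: "x \<notin> vec.span S" by blast
  define w where "w = x - (\<Sum>s\<in>S. cinner s x *s s)"
  have "w \<noteq> 0"
  proof
    assume "w = 0"
    then have "x = (\<Sum>s\<in>S. cinner s x *s s)" by (simp add: w_def)
    also have "\<dots> \<in> vec.span S"
      by (intro vec.span_sum vec.span_scale vec.span_base)
    finally show False using x by simp
  qed
  moreover have "cinner t w = 0" if t: "t \<in> S" for t
  proof -
    have "cinner t w = cinner t x - (\<Sum>s\<in>S. cinner s x * cinner t s)"
      by (simp add: w_def cinner_diff_right cinner_sum_right cinner_scale_right)
    also have "(\<Sum>s\<in>S. cinner s x * cinner t s) = (\<Sum>s\<in>S. if t = s then cinner s x else 0)"
      using on t by (intro sum.cong) (auto simp: orthonormal_def)
    also have "\<dots> = cinner t x" using fin t by simp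
    finally show ?thesis by simp
  qed
  ultimately show ?thesis by blast
qed

lemma eigen_sets:
  fixes A :: "complex^'n^'n"
  assumes herm: "hermitian A" and k: "k \<le> CARD('n)"
  shows "\<exists>S. finite S \<and> card S = k \<and> orthonormal S \<and>
           (\<forall>s\<in>S. \<exists>l::real. A *v s = complex_of_real l *s s)"
  using k
proof (induction k)
  case 0
  then show ?case by (intro exI[of _ "{}"]) (simp add: orthonormal_def)
next
  case (Suc k)
  have "k \<le> CARD('n)" using Suc.prems by simp
  then have "\<exists>S. finite S \<and> card S = k \<and> orthonormal S \<and>
           (\<forall>s\<in>S. \<exists>l::real. A *v s = complex_of_real l *s s)" by (rule Suc.IH)
  then obtain S where S0: "finite S \<and> card S = k \<and> orthonormal S \<and>
           (\<forall>s\<in>S. \<exists>l::real. A *v s = complex_of_real l *s s)" ..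
  note S = S0[THEN conjunct1] S0[THEN conjunct2, THEN conjunct1]
     S0[THEN conjunct2, THEN conjunct2, THEN conjunct1] S0[THEN conjunct2, THEN conjunct2, THEN conjunct2]
  obtain w where w: "w \<noteq> 0" "\<forall>s\<in>S. cinner s w = 0"
    using perp_exists[OF S(1) _ S(3)] S(2) Suc.prems by auto
  obtain v where v: "cinner v v = 1" "\<forall>s\<in>S. cinner s v = 0"
      "\<exists>l::real. A *v v = complex_of_real l *s v"
    using rayleigh_eigen[OF herm S(4) w] by blast
  have vS: "v \<notin> S" using v by auto
  have sv: "cinner s v = 0" "cinner v s = 0" if "s \<in> S" for s
    using v(2) that cinner_commute[of v s] by auto
  have "orthonormal (insert v S)"
    unfolding orthonormal_def
  proof (intro ballI)
    fix x y assume x: "x \<in> insert v S" and y: "y \<in> insert v S"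
    show "cinner x y = (if x = y then 1 else 0)"
    proof (cases "x = v")
      case True
      then show ?thesis using y v(1) sv vS by (cases "y = v") auto
    next
      case False
      then have xS: "x \<in> S" using x by simp
      show ?thesis
      proof (cases "y = v")
        case True then show ?thesis using xS sv vS by auto
      next
        case False then have "y \<in> S" using y by simp
        then show ?thesis using xS S(3) unfolding orthonormal_def by blast
      qed
    qed
  qed
  then show ?case using S v vS by (intro exI[of _ "insert v S"]) auto
qed

lemma unitary_right:
  fixes U :: "complex^'n^'n"
  shows "unitary U \<Longrightarrow> U ** cadj U = mat 1"
  unfolding unitary_def using matrix_left_right_inverse by blast

lemma spectral:
  fixes A :: "complex^'n^'n"
  assumes herm: "hermitian A"
  shows "\<exists>U d. unitary U \<and> A = U ** cdiag d ** cadj U"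
proof -
  obtain S where S: "finite S" "card S = CARD('n)" "orthonormal S"
      "\<forall>s\<in>S. \<exists>l::real. A *v s = complex_of_real l *s s"
    using eigen_sets[OF herm order_refl] by blast
  obtain f where f: "bij_betw f (UNIV::'n set) S"
    using finite_same_card_bij[of "UNIV::'n set" S] S by auto
  have fS: "f i \<in> S" for i using f by (auto simp: bij_betw_def)
  have finj: "f i = f j \<longleftrightarrow> i = j" for i j using f by (auto simp: bij_betw_def inj_on_def)
  define d where "d j = (SOME l::real. A *v f j = complex_of_real l *s f j)" for j
  have d: "A *v f j = complex_of_real (d j) *s f j" for j
    unfolding d_def using S(4) fS by (metis (mono_tags, lifting) someI_ex)
  define U :: "complex^'n^'n" where "U = (\<chi> i j. f j $ i)"
  have "cadj U ** U = mat 1"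
  proof -
    have "(cadj U ** U) $ i $ j = cinner (f i) (f j)" for i j
      by (simp add: U_def matrix_matrix_mult_def cinner_def)
    also have "cinner (f i) (f j) = (if i = j then 1 else 0)" for i j
      using S(3) fS finj by (simp add: orthonormal_def)
    finally show ?thesis by (simp add: vec_eq_iff mat_def)
  qed
  then have U: "unitary U" by (simp add: unitary_def)
  have AU: "A ** U = U ** cdiag d"
  proof -
    have "(A ** U) $ i $ j = (A *v f j) $ i" for i j
      by (simp add: U_def matrix_matrix_mult_def matrix_vector_mult_def)
    moreover have "(U ** cdiag d) $ i $ j = complex_of_real (d j) * f j $ i" for i j
    proof -
      have "(U ** cdiag d) $ i $ j = (\<Sum>k\<in>UNIV. if k = j then f k $ i * complex_of_real (d j) else 0)"
        by (simp add: U_def matrix_matrix_mult_def cdiag_def if_distrib cong: if_cong)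
      also have "\<dots> = complex_of_real (d j) * f j $ i" by simp
      finally show ?thesis .
    qed
    ultimately show ?thesis by (simp add: vec_eq_iff d)
  qed
  have "A = A ** (U ** cadj U)" using unitary_right[OF U] by simp
  also have "\<dots> = U ** cdiag d ** cadj U" by (simp add: matrix_mul_assoc AU)
  finally show ?thesis using U by blast
qed


lemma cquad_conj: "cquad (U ** M ** cadj U) v = cquad M (cadj U *v v)"
  by (simp add: cquad_cinner flip: matrix_vector_mul_assoc) (simp add: cinner_matrix)

lemma cdiag_mv: "(cdiag d *v w) $ k = complex_of_real (d k) * w $ k"
proof -
  have "(cdiag d *v w) $ k = (\<Sum>j\<in>UNIV. (if k = j then complex_of_real (d k) else 0) * w $ j)"
    by (simp add: cdiag_def matrix_vector_mult_def)
  also have "\<dots> = (\<Sum>j\<in>UNIV. if k = j then complex_of_real (d k) * w $ k else 0)"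
    by (rule sum.cong) auto
  also have "\<dots> = complex_of_real (d k) * w $ k" by simp
  finally show ?thesis .
qed

lemma cquad_cdiag: "cquad (cdiag d) w = complex_of_real (\<Sum>k\<in>UNIV. d k * (cmod (w$k))^2)"
  by (simp add: cquad_def cdiag_mv of_real_sum complex_norm_square mult_ac del: of_real_power)

lemma axis_cquad: "cquad (cdiag d) (axis k 1) = complex_of_real (d k)"
proof -
  have "(\<Sum>j\<in>UNIV. d j * (cmod (axis k 1 $ j))^2) = (\<Sum>j\<in>UNIV. if j = k then d k else 0)"
    by (intro sum.cong) (auto simp: axis_def)
  then show ?thesis by (simp add: cquad_cdiag)
qed

lemma unitary_mv: "unitary U \<Longrightarrow> cadj U *v (U *v w) = w"
  by (simp add: unitary_def matrix_vector_mul_assoc)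

lemma unitary_mv': "unitary U \<Longrightarrow> U *v (cadj U *v w) = w"
  by (simp add: unitary_right matrix_vector_mul_assoc)

lemma cquad_decomp_U: "unitary U \<Longrightarrow> cquad (U ** cdiag d ** cadj U) (U *v w) = cquad (cdiag d) w"
  by (simp add: cquad_conj unitary_mv)

lemma axis_nz: "axis k (1::complex) \<noteq> 0"
  by (simp add: axis_def vec_eq_iff) 

lemma decomp_psd_d:
  assumes U: "unitary U" and A: "A = U ** cdiag d ** cadj U" and psd: "\<forall>v. Re (cquad A v) \<ge> 0"
  shows "d k \<ge> 0"
  using psd[rule_format, of "U *v axis k 1"] by (simp add: A cquad_decomp_U[OF U] axis_cquad)

lemma decomp_posdef_d:
  assumes U: "unitary U" and A: "A = U ** cdiag d ** cadj U" and pd: "posdef A"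
  shows "d k > 0"
proof -
  have "U *v axis k 1 \<noteq> 0"
    using unitary_mv[OF U, of "axis k 1"] axis_nz by (metis matrix_vector_mult_0_right)
  then show ?thesis using pd unfolding posdef_def
    by (auto simp: A cquad_decomp_U[OF U] axis_cquad)
qed

lemma hermitian_decomp: "hermitian (U ** cdiag d ** cadj U)"
  by (simp add: hermitian_def cadj_mult cadj_cdiag matrix_mul_assoc)

lemma decomp_psd:
  assumes U: "unitary U" and d: "\<forall>k. d k \<ge> 0"
  shows "psd (U ** cdiag d ** cadj U)"
  unfolding psd_def using hermitian_decomp[of U d] hermitian_cquad_Reals[OF hermitian_decomp]
  by (auto simp: cquad_conj cquad_cdiag d intro!: sum_nonneg)

lemma psd_mlog:
  assumes "psd A"
  shows "\<exists>U d. unitary U \<and> (\<forall>i. d i \<ge> 0) \<and> A = U ** cdiag d ** cadj U \<and>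
       mlog A = U ** cdiag (\<lambda>i. if d i > 0 then ln (d i) else 0) ** cadj U"
proof -
  have "hermitian A" using assms by (simp add: psd_def)
  then obtain U d where U: "unitary U" and A: "A = U ** cdiag d ** cadj U"
    using spectral by blast
  have "\<forall>i. d i \<ge> 0" using decomp_psd_d[OF U A] assms by (auto simp: psd_def)
  then have "\<exists>L. \<exists>U d. unitary U \<and> (\<forall>i. d i \<ge> 0) \<and> A = U ** cdiag d ** cadj U \<and>
       L = U ** cdiag (\<lambda>i. if d i > 0 then ln (d i) else 0) ** cadj U"
    using U A by blast
  from someI_ex[OF this] show ?thesis unfolding mlog_def by blast
qed

lemma posdef_psd: "posdef A \<Longrightarrow> psd A"
  unfolding posdef_def psd_def
  by (metis cinner_zero_left cquad_cinner hermitian_cquad_Reals less_eq_real_def zero_complex.sel(1))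

lemma posdef_mlog:
  assumes "posdef A"
  shows "\<exists>U d. unitary U \<and> (\<forall>i. d i > 0) \<and> A = U ** cdiag d ** cadj U \<and>
       mlog A = U ** cdiag (\<lambda>i. ln (d i)) ** cadj U"
proof -
  obtain U d where U: "unitary U" "\<forall>i. d i \<ge> 0" and A: "A = U ** cdiag d ** cadj U"
    and L: "mlog A = U ** cdiag (\<lambda>i. if d i > 0 then ln (d i) else 0) ** cadj U"
    using psd_mlog[OF posdef_psd[OF assms]] by blast
  have d: "\<forall>i. d i > 0" using decomp_posdef_d[OF U(1) A assms] by blast
  then have "(\<lambda>i. if d i > 0 then ln (d i) else 0) = (\<lambda>i. ln (d i))" by auto
  then show ?thesis using U A L d by metis
qed

lemma trace_cdiag_right: "trace (M ** cdiag e) = (\<Sum>j\<in>UNIV. M $ j $ j * complex_of_real (e j))"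
proof -
  have "(M ** cdiag e) $ j $ j = M $ j $ j * complex_of_real (e j)" for j
  proof -
    have "(M ** cdiag e) $ j $ j = (\<Sum>k\<in>UNIV. if k = j then M $ j $ k * complex_of_real (e j) else 0)"
      by (simp add: cdiag_def matrix_matrix_mult_def if_distrib cong: if_cong)
    also have "\<dots> = M $ j $ j * complex_of_real (e j)" by simp
    finally show ?thesis .
  qed
  then show ?thesis by (simp add: trace_def)
qed

lemma conj_diag_entry: "(cadj V ** Q ** V) $ j $ j = cquad Q (column j V)"
proof -
  have "(cadj V ** Q ** V) $ j $ j = (\<Sum>k\<in>UNIV. \<Sum>n\<in>UNIV. cnj (V$n$j) * Q$n$k * V$k$j)"
    by (simp add: matrix_matrix_mult_def sum_distrib_right)
  also have "\<dots> = (\<Sum>n\<in>UNIV. \<Sum>k\<in>UNIV. cnj (V$n$j) * Q$n$k * V$k$j)"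
    by (rule sum.swap)
  also have "\<dots> = cquad Q (column j V)"
    by (simp add: cquad_def matrix_vector_mult_def column_def sum_distrib_left mult.assoc)
  finally show ?thesis .
qed

lemma trace_conj: "trace (Q ** (V ** cdiag e ** cadj V)) = (\<Sum>j\<in>UNIV. cquad Q (column j V) * complex_of_real (e j))"
proof -
  have "trace (Q ** (V ** cdiag e ** cadj V)) = trace ((Q ** V ** cdiag e) ** cadj V)"
    by (simp add: matrix_mul_assoc)
  also have "\<dots> = trace (cadj V ** (Q ** V ** cdiag e))" by (rule trace_mul_sym)
  also have "\<dots> = trace ((cadj V ** Q ** V) ** cdiag e)" by (simp add: matrix_mul_assoc)
  finally show ?thesis by (simp add: trace_cdiag_right conj_diag_entry)
qed

lemma Re_trace_conj:
  assumes "hermitian Q"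
  shows "Re (trace (Q ** (V ** cdiag e ** cadj V))) = (\<Sum>j\<in>UNIV. Re (cquad Q (column j V)) * e j)"
proof -
  have "Re (cquad Q (column j V) * complex_of_real (e j)) = Re (cquad Q (column j V)) * e j" for j
    by simp
  then show ?thesis by (simp add: trace_conj)
qed

lemma det_decomp:
  assumes U: "unitary U"
  shows "det (U ** cdiag d ** cadj U) = complex_of_real (\<Prod>i\<in>UNIV. d i)"
proof -
  have "det (U ** cdiag d ** cadj U) = det U * det (cdiag d) * det (cadj U)"
    by (simp add: det_mul)
  also have "\<dots> = det (cdiag d) * det (cadj U ** U)" by (simp add: det_mul)
  also have "det (cadj U ** U) = 1" using U by (simp add: unitary_def)
  also have "det (cdiag d) = (\<Prod>i\<in>UNIV. complex_of_real (d i))"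
    by (subst det_diagonal) (auto simp: cdiag_def)
  finally show ?thesis by simp
qed

lemma trace_decomp:
  assumes U: "unitary U"
  shows "trace (U ** cdiag d ** cadj U) = complex_of_real (\<Sum>i\<in>UNIV. d i)"
proof -
  have "trace (U ** cdiag d ** cadj U) = trace (cadj U ** (U ** cdiag d))" by (rule trace_mul_sym)
  also have "\<dots> = trace (cdiag d)" using U by (simp add: matrix_mul_assoc unitary_def)
  finally show ?thesis by (simp add: trace_def cdiag_def)
qed

lemma neg_logdet_posdef:
  assumes "posdef A"
  shows "neg_logdet A = - Re (trace (mlog A))"
proof -
  obtain U d where U: "unitary U" and d: "\<forall>i. d i > 0" and A: "A = U ** cdiag d ** cadj U"
    and L: "mlog A = U ** cdiag (\<lambda>i. ln (d i)) ** cadj U"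
    using posdef_mlog[OF assms] by blast
  have "neg_logdet A = - ln (\<Prod>i\<in>UNIV. d i)" by (simp add: neg_logdet_def A det_decomp[OF U] del: of_real_prod)
  also have "\<dots> = - (\<Sum>i\<in>UNIV. ln (d i))" using d by (subst ln_prod) (auto simp: less_imp_neq[symmetric])
  also have "\<dots> = - Re (trace (mlog A))" by (simp add: L trace_decomp[OF U])
  finally show ?thesis .
qed

lemma eigenvalues_decomp:
  assumes U: "unitary U" and A: "A = U ** cdiag d ** cadj U"
  shows "real_eigenvalues A = range d"
proof
  show "range d \<subseteq> real_eigenvalues A"
  proof
    fix r assume "r \<in> range d"
    then obtain k where r: "r = d k" by blast
    have nz: "U *v axis k 1 \<noteq> 0"
      using unitary_mv[OF U, of "axis k 1"] axis_nz by (metis matrix_vector_mult_0_right)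
    have "cdiag d *v axis k 1 = complex_of_real (d k) *s axis k 1"
      by (simp add: vec_eq_iff cdiag_mv axis_def)
    then have "A *v (U *v axis k 1) = complex_of_real r *s (U *v axis k 1)"
      by (simp add: A r unitary_mv[OF U] mv_scale flip: matrix_vector_mul_assoc)
    then show "r \<in> real_eigenvalues A" using nz by (auto simp: real_eigenvalues_def)
  qed
next
  show "real_eigenvalues A \<subseteq> range d"
  proof
    fix r assume "r \<in> real_eigenvalues A"
    then obtain v where v: "v \<noteq> 0" "A *v v = complex_of_real r *s v"
      by (auto simp: real_eigenvalues_def)
    define w where "w = cadj U *v v"
    have "w \<noteq> 0" using v unitary_mv'[OF U, of v] by (metis matrix_vector_mult_0_right w_def)
    then obtain k where k: "w $ k \<noteq> 0" by (auto simp: vec_eq_iff)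
    have "cdiag d *v w = cadj U *v (A *v v)"
      by (simp add: A w_def unitary_mv[OF U] flip: matrix_vector_mul_assoc)
    also have "\<dots> = complex_of_real r *s w" by (simp add: v w_def mv_scale)
    finally have "(cdiag d *v w) $ k = complex_of_real r * w $ k" by simp
    then have "complex_of_real (d k) = complex_of_real r" using k by (simp add: cdiag_mv)
    then show "r \<in> range d" by (metis of_real_eq_iff rangeI)
  qed
qed


lemma cquad_add: "cquad (X + Y) w = cquad X w + cquad Y w"
  by (simp add: cquad_def matrix_vector_mult_def sum.distrib distrib_left distrib_right)

lemma cquad_scaleR: "cquad (c *\<^sub>R X) w = complex_of_real c * cquad X w"
  by (simp add: cquad_def matrix_vector_mult_def sum_distrib_left scaleR_conv_of_real[where 'a=complex] mult_ac)

lemma mat_mv: "mat z *v w = z *s (w::complex^'n)"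
proof -
  have "(mat z *v w) $ i = z * w $ i" for i
  proof -
    have "(mat z *v w) $ i = (\<Sum>j\<in>UNIV. (if i = j then z else 0) * w $ j)"
      by (simp add: matrix_vector_mult_def mat_def)
    also have "\<dots> = (\<Sum>j\<in>UNIV. if i = j then z * w $ i else 0)"
      by (rule sum.cong) auto
    finally show ?thesis by simp
  qed
  then show ?thesis by (simp add: vec_eq_iff)
qed

lemma mat_mult_left: "mat z ** M = (\<chi> i j. z * (M::complex^'n^'n) $ i $ j)"
proof -
  have "(mat z ** M) $ i $ j = z * M $ i $ j" for i j
  proof -
    have "(mat z ** M) $ i $ j = (\<Sum>k\<in>UNIV. (if i = k then z else 0) * M $ k $ j)"
      by (simp add: matrix_matrix_mult_def mat_def)
    also have "\<dots> = (\<Sum>k\<in>UNIV. if i = k then z * M $ i $ j else 0)"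
      by (rule sum.cong) auto
    finally show ?thesis by simp
  qed
  then show ?thesis by (simp add: vec_eq_iff)
qed

lemma mat_mult_right: "M ** mat z = (\<chi> i j. z * (M::complex^'n^'n) $ i $ j)"
proof -
  have "(M ** mat z) $ i $ j = z * M $ i $ j" for i j
  proof -
    have "(M ** mat z) $ i $ j = (\<Sum>k\<in>UNIV. M $ i $ k * (if k = j then z else 0))"
      by (simp add: matrix_matrix_mult_def mat_def)
    also have "\<dots> = (\<Sum>k\<in>UNIV. if k = j then z * M $ i $ j else 0)"
      by (rule sum.cong) auto
    finally show ?thesis by simp
  qed
  then show ?thesis by (simp add: vec_eq_iff)
qed

lemma cquad_mat: "cquad (mat z) w = z * cinner w w"
  by (simp add: cquad_cinner mat_mv cinner_scale_right)

lemma inv_var: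
  fixes M N :: "complex^'n^'n"
  assumes herm: "hermitian M" and psd: "\<forall>w. Re (cquad M w) \<ge> 0" and MN: "M ** N = mat 1"
  shows "Re (cquad N x) \<ge> 2 * Re (cinner w x) - Re (cquad M w)"
    and "Re (cquad N x) = 2 * Re (cinner (N *v x) x) - Re (cquad M (N *v x))"
proof -
  define b where "b = N *v x"
  have Mb: "M *v b = x" by (simp add: b_def matrix_vector_mul_assoc MN)
  have bMw: "cinner b (M *v w) = cinner x w" using hermitian_cinner[OF herm, of b w] Mb by simp
  have bx: "cinner b x = cnj (cquad N x)" unfolding b_def cquad_cinner by (rule cinner_commute)
  have xw: "Re (cinner x w) = Re (cinner w x)" by (simp add: cinner_commute[of x w])
  have "cquad M (w - b) = cquad M w - cinner w x - cinner b (M *v w) + cinner b x"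
    by (simp add: cquad_cinner mv_diff cinner_diff_left cinner_diff_right Mb)
  then have "Re (cquad M (w - b)) = Re (cquad M w) - 2 * Re (cinner w x) + Re (cquad N x)"
    by (simp add: bMw bx xw)
  then show "Re (cquad N x) \<ge> 2 * Re (cinner w x) - Re (cquad M w)"
    using psd[rule_format, of "w - b"] by simp
  have "cquad M b = cinner b x" by (simp add: cquad_cinner Mb)
  then show "Re (cquad N x) = 2 * Re (cinner (N *v x) x) - Re (cquad M (N *v x))"
    by (simp add: bx flip: b_def)
qed

lemma inv_convex:
  fixes X Y NX NY NZ :: "complex^'n^'n"
  assumes hX: "hermitian X" "\<forall>w. Re (cquad X w) \<ge> 0" "X ** NX = mat 1"
    and hY: "hermitian Y" "\<forall>w. Re (cquad Y w) \<ge> 0" "Y ** NY = mat 1"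
    and u: "u \<ge> 0" "v \<ge> 0" "u + v = 1"
    and hZ: "hermitian (u *\<^sub>R X + v *\<^sub>R Y)" "\<forall>w. Re (cquad (u *\<^sub>R X + v *\<^sub>R Y) w) \<ge> 0"
      "(u *\<^sub>R X + v *\<^sub>R Y) ** NZ = mat 1"
  shows "Re (cquad NZ x) \<le> u * Re (cquad NX x) + v * Re (cquad NY x)"
proof -
  define w where "w = NZ *v x"
  have "Re (cquad NZ x) = 2 * Re (cinner w x) - Re (cquad (u *\<^sub>R X + v *\<^sub>R Y) w)"
    using inv_var(2)[OF hZ] by (simp add: w_def)
  also have "\<dots> = u * (2 * Re (cinner w x) - Re (cquad X w)) + v * (2 * Re (cinner w x) - Re (cquad Y w))"
    using u by (simp add: cquad_add cquad_scaleR algebra_simps flip: distrib_right)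
  also have "\<dots> \<le> u * Re (cquad NX x) + v * Re (cquad NY x)"
    using inv_var(1)[OF hX, of w x] inv_var(1)[OF hY, of w x] u
    by (intro add_mono mult_left_mono) auto
  finally show ?thesis .
qed

lemma trace_Q_N:
  "trace ((U ** cdiag q ** cadj U) ** N) = (\<Sum>j\<in>UNIV. cquad N (column j U) * complex_of_real (q j))"
proof -
  have "trace ((U ** cdiag q ** cadj U) ** N) = trace ((U ** cdiag q) ** (cadj U ** N))"
    by (simp add: matrix_mul_assoc)
  also have "\<dots> = trace ((cadj U ** N) ** (U ** cdiag q))" by (rule trace_mul_sym)
  also have "\<dots> = trace ((cadj U ** N ** U) ** cdiag q)" by (simp add: matrix_mul_assoc)
  finally show ?thesis by (simp add: trace_cdiag_right conj_diag_entry)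
qed

lemma Re_trace_Q_N:
  "Re (trace ((U ** cdiag q ** cadj U) ** N)) = (\<Sum>j\<in>UNIV. q j * Re (cquad N (column j U)))"
  by (simp add: trace_Q_N mult.commute)

lemma cdiag_mult: "cdiag a ** cdiag b = cdiag (\<lambda>j. a j * b j)"
proof -
  have "(cdiag a ** cdiag b) $ i $ j = cdiag (\<lambda>j. a j * b j) $ i $ j" for i j
  proof -
    have "(cdiag a ** cdiag b) $ i $ j = (\<Sum>k\<in>UNIV. if k = i then (if i = j then complex_of_real (a i * b j) else 0) else 0)"
      by (rule trans[OF _ sum.cong[OF refl]], simp add: matrix_matrix_mult_def, auto simp: cdiag_def)
    also have "\<dots> = cdiag (\<lambda>j. a j * b j) $ i $ j" by (simp add: cdiag_def)
    finally show ?thesis .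
  qed
  then show ?thesis by (simp add: vec_eq_iff)
qed

lemma matrix_add_rdistrib': "((B + C) ** A) = (B ** A) + (C ** (A::complex^'n^'n))"
  by (simp add: vec_eq_iff matrix_matrix_mult_def sum.distrib distrib_right)

lemma cdiag_add: "cdiag a + cdiag b = cdiag (\<lambda>j. a j + b j)"
  by (simp add: vec_eq_iff cdiag_def)

lemma cdiag_const: "cdiag (\<lambda>j. c) = mat (complex_of_real c)"
  by (simp add: vec_eq_iff cdiag_def mat_def)

lemma mat_conj: "unitary U \<Longrightarrow> mat z = U ** mat z ** cadj U"
proof -
  assume U: "unitary U"
  have "U ** mat z = mat z ** U"
    by (simp add: mat_mult_left mat_mult_right)
  then have "U ** mat z ** cadj U = mat z ** (U ** cadj U)" by (simp add: matrix_mul_assoc)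
  then show ?thesis using unitary_right[OF U] by simp
qed

lemma shift_decomp:
  assumes U: "unitary U"
  shows "U ** cdiag e ** cadj U + mat (complex_of_real s) = U ** cdiag (\<lambda>j. e j + s) ** cadj U"
proof -
  have "U ** cdiag e ** cadj U + mat (complex_of_real s) = U ** cdiag e ** cadj U + U ** cdiag (\<lambda>j. s) ** cadj U"
    using mat_conj[OF U] by (simp add: cdiag_const)
  also have "\<dots> = U ** (cdiag e + cdiag (\<lambda>j. s)) ** cadj U"
    by (simp add: matrix_add_ldistrib matrix_add_rdistrib')
  finally show ?thesis by (simp add: cdiag_add)
qed

lemma decomp_inverse:
  assumes U: "unitary U" and a: "\<forall>j. a j \<noteq> 0"
  shows "(U ** cdiag a ** cadj U) ** (U ** cdiag (\<lambda>j. 1 / a j) ** cadj U) = mat 1"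
proof -
  have "(U ** cdiag a ** cadj U) ** (U ** cdiag (\<lambda>j. 1 / a j) ** cadj U)
      = U ** (cdiag a ** (cadj U ** U) ** cdiag (\<lambda>j. 1 / a j)) ** cadj U"
    by (simp add: matrix_mul_assoc)
  also have "\<dots> = U ** cdiag (\<lambda>j. a j * (1 / a j)) ** cadj U"
    using U by (simp add: unitary_def cdiag_mult)
  also have "(\<lambda>j. a j * (1 / a j)) = (\<lambda>j. 1)" using a by auto
  finally show ?thesis using unitary_right[OF U] by (simp add: cdiag_const matrix_mul_assoc)
qed

lemma posdef_shift:
  assumes "posdef A" "s \<ge> 0"
  shows "hermitian (A + mat (complex_of_real s))" "\<forall>w. Re (cquad (A + mat (complex_of_real s)) w) \<ge> 0"
proof -
  show "hermitian (A + mat (complex_of_real s))"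
    using assms by (simp add: posdef_def hermitian_def cadj_add cadj_mat)
  show "\<forall>w. Re (cquad (A + mat (complex_of_real s)) w) \<ge> 0"
  proof
    fix w
    have "Re (cquad A w) \<ge> 0" using posdef_psd[OF assms(1)] by (simp add: psd_def)
    moreover have "Re (complex_of_real s * cinner w w) \<ge> 0"
      using assms(2) by (simp add: cinner_self_norm)
    ultimately show "Re (cquad (A + mat (complex_of_real s)) w) \<ge> 0"
      by (simp add: cquad_add cquad_mat)
  qed
qed

lemma trace_one_decomp: "unitary V \<Longrightarrow> Q = Q ** (V ** cdiag (\<lambda>j. 1) ** cadj V)"
  by (simp add: cdiag_const unitary_right)

lemma posdef_data:
  fixes A Q :: "complex^'n^'n"
  assumes pd: "posdef A" and hQ: "hermitian Q"
  shows "\<exists>(w::'n \<Rightarrow> real) (e::'n \<Rightarrow> real). (\<forall>j. e j > 0) \<and> Re (trace (Q ** mlog A)) = (\<Sum>j\<in>UNIV. w j * ln (e j))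
      \<and> (\<Sum>j\<in>UNIV. w j) = Re (trace Q)
      \<and> (\<forall>s\<ge>0. \<exists>N. (A + mat (complex_of_real s)) ** N = mat 1 \<and>
             Re (trace (Q ** N)) = (\<Sum>j\<in>UNIV. w j / (e j + s)))"
proof -
  obtain V e where V: "unitary V" and e: "\<forall>i. e i > 0" and A: "A = V ** cdiag e ** cadj V"
    and L: "mlog A = V ** cdiag (\<lambda>i. ln (e i)) ** cadj V"
    using posdef_mlog[OF pd] by blast
  define w where "w j = Re (cquad Q (column j V))" for j
  have 1: "Re (trace (Q ** mlog A)) = (\<Sum>j\<in>UNIV. w j * ln (e j))"
    by (simp add: L Re_trace_conj[OF hQ] w_def)
  have 2: "(\<Sum>j\<in>UNIV. w j) = Re (trace Q)"
    using Re_trace_conj[OF hQ, of V "\<lambda>j. 1"] trace_one_decomp[OF V, of Q] by (simp add: w_def)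
  have 3: "\<exists>N. (A + mat (complex_of_real s)) ** N = mat 1 \<and>
             Re (trace (Q ** N)) = (\<Sum>j\<in>UNIV. w j / (e j + s))" if s: "s \<ge> 0" for s
  proof (intro exI conjI)
    have nz: "\<forall>j. e j + s \<noteq> 0" using e s by (metis add_pos_nonneg less_irrefl)
    show "(A + mat (complex_of_real s)) ** (V ** cdiag (\<lambda>j. 1 / (e j + s)) ** cadj V) = mat 1"
      using decomp_inverse[OF V nz] by (simp add: A shift_decomp[OF V])
    show "Re (trace (Q ** (V ** cdiag (\<lambda>j. 1 / (e j + s)) ** cadj V))) = (\<Sum>j\<in>UNIV. w j / (e j + s))"
      by (simp add: Re_trace_conj[OF hQ] w_def)
  qed
  have 4: "\<forall>s\<ge>0. \<exists>N. (A + mat (complex_of_real s)) ** N = mat 1 \<and>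
             Re (trace (Q ** N)) = (\<Sum>j\<in>UNIV. w j / (e j + s))"
    using 3 by blast
  show ?thesis
    using e 1 2 4 by blast
qed


lemma scalar_integral:
  fixes e N :: real
  assumes e: "e > 0" and N: "N \<ge> 0"
  shows "((\<lambda>s. 1/(1+s) - 1/(e+s)) has_integral (ln (1+N) - ln (e+N) + ln e)) {0..N}"
proof -
  have "((\<lambda>s. 1/(1+s) - 1/(e+s)) has_integral
        ((ln (1+N) - ln (e+N)) - (ln (1+0) - ln (e+0)))) {0..N}"
  proof (rule fundamental_theorem_of_calculus[OF N])
    fix x assume x: "x \<in> {0..N}"
    then have x0: "x \<ge> 0" by simp
    have "((\<lambda>s. ln (1+s) - ln (e+s)) has_real_derivative (1/(1+x) - 1/(e+x))) (at x within {0..N})"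
      using x0 e by (auto intro!: derivative_eq_intros)
    then show "((\<lambda>s. ln (1+s) - ln (e+s)) has_vector_derivative (1/(1+x) - 1/(e+x))) (at x within {0..N})"
      by (simp add: has_real_derivative_iff_has_vector_derivative)
  qed
  then show ?thesis by simp
qed

lemma data_int:
  fixes w e :: "'n::finite \<Rightarrow> real"
  assumes e: "\<forall>j. e j > 0" and N: "N \<ge> 0"
  shows "((\<lambda>s. \<Sum>j\<in>UNIV. w j * (1/(1+s) - 1/(e j+s))) has_integral
          (\<Sum>j\<in>UNIV. w j * (ln (1+N) - ln (e j+N) + ln (e j)))) {0..N}"
  by (intro has_integral_sum has_integral_mult_right scalar_integral e[rule_format] N) auto

lemma ln_ratio_lim: "(e::real) > 0 \<Longrightarrow> (\<lambda>n::nat. ln (1 + real n) - ln (e + real n)) \<longlonglongrightarrow> 0"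
  by real_asymp

lemma data_lim:
  fixes w e :: "'n::finite \<Rightarrow> real"
  assumes e: "\<forall>j. e j > 0"
  shows "(\<lambda>n. \<Sum>j\<in>UNIV. w j * (ln (1 + real n) - ln (e j + real n) + ln (e j)))
           \<longlonglongrightarrow> (\<Sum>j\<in>UNIV. w j * ln (e j))"
proof -
  have "(\<lambda>n. \<Sum>j\<in>UNIV. w j * (ln (1 + real n) - ln (e j + real n) + ln (e j)))
           \<longlonglongrightarrow> (\<Sum>j\<in>UNIV. w j * (0 + ln (e j)))"
    by (intro tendsto_intros ln_ratio_lim e[rule_format])
  then show ?thesis by simp
qed

lemma f_eq:
  fixes w e :: "'n::finite \<Rightarrow> real" and s :: real
  shows "(\<Sum>j\<in>UNIV. w j * (1/(1+s) - 1/(e j+s))) = (\<Sum>j\<in>UNIV. w j) / (1+s) - (\<Sum>j\<in>UNIV. w j / (e j + s))"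
proof -
  have "(\<Sum>j\<in>UNIV. w j * (1/(1+s) - 1/(e j+s))) = (\<Sum>j\<in>UNIV. w j / (1+s) - w j / (e j+s))"
    by (rule sum.cong) (simp_all only: right_diff_distrib times_divide_eq_right mult_1_right)
  also have "\<dots> = (\<Sum>j\<in>UNIV. w j / (1+s)) - (\<Sum>j\<in>UNIV. w j / (e j+s))"
    by (rule sum_subtractf)
  also have "(\<Sum>j\<in>UNIV. w j / (1+s)) = (\<Sum>j\<in>UNIV. w j) / (1+s)"
    by (rule sum_divide_distrib[symmetric])
  finally show ?thesis .
qed

lemma posdef_data_obt:
  fixes A Q :: "complex^'n^'n"
  assumes pd: "posdef A" and hQ: "hermitian Q"
  obtains w e :: "'n \<Rightarrow> real" where "\<forall>j. e j > 0" "Re (trace (Q ** mlog A)) = (\<Sum>j\<in>UNIV. w j * ln (e j))"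
      "(\<Sum>j\<in>UNIV. w j) = Re (trace Q)"
      "\<forall>s\<ge>0. \<exists>N. (A + mat (complex_of_real s)) ** N = mat 1 \<and>
             Re (trace (Q ** N)) = (\<Sum>j\<in>UNIV. w j / (e j + s))"
proof -
  obtain w e :: "'n \<Rightarrow> real" where H: "(\<forall>j. e j > 0) \<and> Re (trace (Q ** mlog A)) = (\<Sum>j\<in>UNIV. w j * ln (e j))
      \<and> (\<Sum>j\<in>UNIV. w j) = Re (trace Q)
      \<and> (\<forall>s\<ge>0. \<exists>N. (A + mat (complex_of_real s)) ** N = mat 1 \<and>
             Re (trace (Q ** N)) = (\<Sum>j\<in>UNIV. w j / (e j + s)))"
    using posdef_data[OF assms] by (elim exE) (rule that)
  show thesis
    by (rule that[OF H[THEN conjunct1] H[THEN conjunct2, THEN conjunct1]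
         H[THEN conjunct2, THEN conjunct2, THEN conjunct1] H[THEN conjunct2, THEN conjunct2, THEN conjunct2]])
qed

lemma concave_trace_log:
  fixes Q X Y U :: "complex^'n^'n"
  assumes U: "unitary U" and q: "\<forall>k. q k \<ge> 0" and Q: "Q = U ** cdiag q ** cadj U"
    and X: "posdef X" and Y: "posdef Y" and u: "u \<ge> 0" "v \<ge> 0" "u + v = 1"
    and Z: "posdef (u *\<^sub>R X + v *\<^sub>R Y)"
  shows "u * Re (trace (Q ** mlog X)) + v * Re (trace (Q ** mlog Y))
           \<le> Re (trace (Q ** mlog (u *\<^sub>R X + v *\<^sub>R Y)))"
proof -
  define Zm where "Zm = u *\<^sub>R X + v *\<^sub>R Y"
  have hQ: "hermitian Q" using Q hermitian_decomp by simp
  obtain wX eX :: "'n \<Rightarrow> real" where eX: "\<forall>j. eX j > 0" and PX: "Re (trace (Q ** mlog X)) = (\<Sum>j\<in>UNIV. wX j * ln (eX j))"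
    and TX: "(\<Sum>j\<in>UNIV. wX j) = Re (trace Q)"
    and NX: "\<forall>s\<ge>0. \<exists>N. (X + mat (complex_of_real s)) ** N = mat 1 \<and>
             Re (trace (Q ** N)) = (\<Sum>j\<in>UNIV. wX j / (eX j + s))"
    by (rule posdef_data_obt[OF X hQ]) (rule that)
  obtain wY eY :: "'n \<Rightarrow> real" where eY: "\<forall>j. eY j > 0" and PY: "Re (trace (Q ** mlog Y)) = (\<Sum>j\<in>UNIV. wY j * ln (eY j))"
    and TY: "(\<Sum>j\<in>UNIV. wY j) = Re (trace Q)"
    and NY: "\<forall>s\<ge>0. \<exists>N. (Y + mat (complex_of_real s)) ** N = mat 1 \<and>
             Re (trace (Q ** N)) = (\<Sum>j\<in>UNIV. wY j / (eY j + s))"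
    by (rule posdef_data_obt[OF Y hQ]) (rule that)
  obtain wZ eZ :: "'n \<Rightarrow> real" where eZ: "\<forall>j. eZ j > 0" and PZ: "Re (trace (Q ** mlog Zm)) = (\<Sum>j\<in>UNIV. wZ j * ln (eZ j))"
    and TZ: "(\<Sum>j\<in>UNIV. wZ j) = Re (trace Q)"
    and NZ: "\<forall>s\<ge>0. \<exists>N. (Zm + mat (complex_of_real s)) ** N = mat 1 \<and>
             Re (trace (Q ** N)) = (\<Sum>j\<in>UNIV. wZ j / (eZ j + s))"
    by (rule posdef_data_obt[OF Z[folded Zm_def] hQ]) (rule that)
  define T where "T = Re (trace Q)"
  note TX = TX[folded T_def] and TY = TY[folded T_def] and TZ = TZ[folded T_def]
  have key: "(\<Sum>j\<in>UNIV. wZ j / (eZ j + s)) \<le> u * (\<Sum>j\<in>UNIV. wX j / (eX j + s)) + v * (\<Sum>j\<in>UNIV. wY j / (eY j + s))"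
    if s: "s \<ge> 0" for s
  proof -
    obtain Nx where Nx: "(X + mat (complex_of_real s)) ** Nx = mat 1"
        "Re (trace (Q ** Nx)) = (\<Sum>j\<in>UNIV. wX j / (eX j + s))" using NX s by blast
    obtain Ny where Ny: "(Y + mat (complex_of_real s)) ** Ny = mat 1"
        "Re (trace (Q ** Ny)) = (\<Sum>j\<in>UNIV. wY j / (eY j + s))" using NY s by blast
    obtain Nz where Nz: "(Zm + mat (complex_of_real s)) ** Nz = mat 1"
        "Re (trace (Q ** Nz)) = (\<Sum>j\<in>UNIV. wZ j / (eZ j + s))" using NZ s by blast
    define M :: "complex^'n^'n" where "M = mat (complex_of_real s)"
    have ZM: "u *\<^sub>R (X + M) + v *\<^sub>R (Y + M) = Zm + M" for M :: "complex^'n^'n"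
    proof -
      have "u *\<^sub>R (X + M) + v *\<^sub>R (Y + M) = Zm + (u + v) *\<^sub>R M"
        by (simp add: Zm_def scaleR_add_right scaleR_add_left algebra_simps)
      then show ?thesis using u by simp
    qed
    have hX': "hermitian (X + M)" "\<forall>w. Re (cquad (X + M) w) \<ge> 0"
      using posdef_shift[OF X s] by (simp_all add: M_def)
    have hY': "hermitian (Y + M)" "\<forall>w. Re (cquad (Y + M) w) \<ge> 0"
      using posdef_shift[OF Y s] by (simp_all add: M_def)
    have hZ': "hermitian (u *\<^sub>R (X + M) + v *\<^sub>R (Y + M))"
       "\<forall>w. Re (cquad (u *\<^sub>R (X + M) + v *\<^sub>R (Y + M)) w) \<ge> 0"
       "(u *\<^sub>R (X + M) + v *\<^sub>R (Y + M)) ** Nz = mat 1"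
      using posdef_shift[OF Z[folded Zm_def] s] Nz(1) unfolding ZM by (simp_all add: M_def)
    have ineq: "Re (cquad Nz x) \<le> u * Re (cquad Nx x) + v * Re (cquad Ny x)" for x
      by (rule inv_convex[OF hX' Nx(1)[folded M_def] hY' Ny(1)[folded M_def] u hZ'])
    have "Re (trace (Q ** Nz)) = (\<Sum>k\<in>UNIV. q k * Re (cquad Nz (column k U)))"
      by (simp add: Q Re_trace_Q_N)
    also have "\<dots> \<le> (\<Sum>k\<in>UNIV. q k * (u * Re (cquad Nx (column k U)) + v * Re (cquad Ny (column k U))))"
      using q ineq by (intro sum_mono mult_left_mono) auto
    also have "\<dots> = u * (\<Sum>k\<in>UNIV. q k * Re (cquad Nx (column k U))) + v * (\<Sum>k\<in>UNIV. q k * Re (cquad Ny (column k U)))"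
      by (simp add: sum.distrib sum_distrib_left algebra_simps)
    also have "\<dots> = u * Re (trace (Q ** Nx)) + v * Re (trace (Q ** Ny))"
      by (simp add: Q Re_trace_Q_N)
    finally show ?thesis using Nx(2) Ny(2) Nz(2) by simp
  qed
  define IX where "IX n = (\<Sum>j\<in>UNIV. wX j * (ln (1 + real n) - ln (eX j + real n) + ln (eX j)))" for n :: nat
  define IY where "IY n = (\<Sum>j\<in>UNIV. wY j * (ln (1 + real n) - ln (eY j + real n) + ln (eY j)))" for n :: nat
  define IZ where "IZ n = (\<Sum>j\<in>UNIV. wZ j * (ln (1 + real n) - ln (eZ j + real n) + ln (eZ j)))" for n :: nat
  have le: "u * IX n + v * IY n \<le> IZ n" for n
  proof -
    have iX: "((\<lambda>s. \<Sum>j\<in>UNIV. wX j * (1/(1+s) - 1/(eX j+s))) has_integral IX n) {0..real n}"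
      unfolding IX_def by (rule data_int[OF eX]) simp
    have iY: "((\<lambda>s. \<Sum>j\<in>UNIV. wY j * (1/(1+s) - 1/(eY j+s))) has_integral IY n) {0..real n}"
      unfolding IY_def by (rule data_int[OF eY]) simp
    have iZ: "((\<lambda>s. \<Sum>j\<in>UNIV. wZ j * (1/(1+s) - 1/(eZ j+s))) has_integral IZ n) {0..real n}"
      unfolding IZ_def by (rule data_int[OF eZ]) simp
    have iXY: "((\<lambda>s. u * (\<Sum>j\<in>UNIV. wX j * (1/(1+s) - 1/(eX j+s))) + v * (\<Sum>j\<in>UNIV. wY j * (1/(1+s) - 1/(eY j+s))))
        has_integral (u * IX n + v * IY n)) {0..real n}"
      by (intro has_integral_add has_integral_mult_right iX iY)
    show ?thesis
    proof (rule has_integral_le[OF iXY iZ])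
      fix s assume "s \<in> {0..real n}"
      then have s: "s \<ge> 0" by simp
      have "u * (\<Sum>j\<in>UNIV. wX j * (1/(1+s) - 1/(eX j+s))) + v * (\<Sum>j\<in>UNIV. wY j * (1/(1+s) - 1/(eY j+s)))
          = (u + v) * (T / (1+s)) - (u * (\<Sum>j\<in>UNIV. wX j / (eX j + s)) + v * (\<Sum>j\<in>UNIV. wY j / (eY j + s)))"
        unfolding f_eq TX TY by (simp add: algebra_simps add_divide_distrib)
      also have "\<dots> \<le> T / (1+s) - (\<Sum>j\<in>UNIV. wZ j / (eZ j + s))"
        using key[OF s] u by simp
      also have "\<dots> = (\<Sum>j\<in>UNIV. wZ j * (1/(1+s) - 1/(eZ j+s)))"
        by (simp add: f_eq TZ)
      finally show "u * (\<Sum>j\<in>UNIV. wX j * (1/(1+s) - 1/(eX j+s))) + v * (\<Sum>j\<in>UNIV. wY j * (1/(1+s) - 1/(eY j+s)))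
          \<le> (\<Sum>j\<in>UNIV. wZ j * (1/(1+s) - 1/(eZ j+s)))" .
    qed
  qed
  have limXY: "(\<lambda>n. u * IX n + v * IY n) \<longlonglongrightarrow> u * Re (trace (Q ** mlog X)) + v * Re (trace (Q ** mlog Y))"
    unfolding PX PY IX_def IY_def by (intro tendsto_intros data_lim eX eY)
  have limZ: "IZ \<longlonglongrightarrow> Re (trace (Q ** mlog Zm))"
    unfolding PZ IZ_def by (intro data_lim eZ)
  show ?thesis
    using LIMSEQ_le[OF limXY limZ] le unfolding Zm_def by blast
qed


lemma posdef_comb:
  fixes X Y :: "complex^'n^'n"
  assumes X: "posdef X" and Y: "posdef Y" and u: "u \<ge> 0" "v \<ge> 0" "u + v = 1"
  shows "posdef (u *\<^sub>R X + v *\<^sub>R Y)"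
  unfolding posdef_def
proof (intro conjI allI impI)
  show "hermitian (u *\<^sub>R X + v *\<^sub>R Y)"
    using X Y by (simp add: posdef_def hermitian_def cadj_add cadj_scaleR)
  fix w :: "complex^'n" assume w: "w \<noteq> 0"
  have cX: "cquad X w \<in> \<real>" "Re (cquad X w) > 0" using X w by (auto simp: posdef_def)
  have cY: "cquad Y w \<in> \<real>" "Re (cquad Y w) > 0" using Y w by (auto simp: posdef_def)
  have eq: "cquad (u *\<^sub>R X + v *\<^sub>R Y) w = complex_of_real u * cquad X w + complex_of_real v * cquad Y w"
    by (simp add: cquad_add cquad_scaleR)
  show "cquad (u *\<^sub>R X + v *\<^sub>R Y) w \<in> \<real>"
    unfolding eq using cX(1) cY(1) by (intro Reals_add Reals_mult) auto
  have "u * Re (cquad X w) + v * Re (cquad Y w) > 0"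
  proof (cases "u > 0")
    case True
    then have "u * Re (cquad X w) > 0" using cX by simp
    moreover have "v * Re (cquad Y w) \<ge> 0" using cY u by simp
    ultimately show ?thesis by linarith
  next
    case False
    then have "v > 0" using u by simp
    then have "v * Re (cquad Y w) > 0" using cY by simp
    moreover have "u * Re (cquad X w) \<ge> 0" using cX u by simp
    ultimately show ?thesis by linarith
  qed
  then show "Re (cquad (u *\<^sub>R X + v *\<^sub>R Y) w) > 0" unfolding eq by simp
qed

lemma trace_scaleR: "trace (c *\<^sub>R (X::complex^'n^'n)) = complex_of_real c * trace X"
  by (simp add: trace_def scaleR_conv_of_real[where 'a=complex] sum_distrib_left)

lemma convex_density_pd: "convex (density_pd :: (complex^'n^'n) set)"
  unfolding convex_def density_pd_def
proof (intro ballI allI impI)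
  fix X Y :: "complex^'n^'n" and u v :: real
  assume X: "X \<in> {A. posdef A \<and> trace A = 1}" and Y: "Y \<in> {A. posdef A \<and> trace A = 1}"
    and u: "0 \<le> u" "0 \<le> v" "u + v = 1"
  have "trace (u *\<^sub>R X + v *\<^sub>R Y) = complex_of_real (u + v)"
    using X Y by (simp add: trace_add trace_scaleR)
  then show "u *\<^sub>R X + v *\<^sub>R Y \<in> {A. posdef A \<and> trace A = 1}"
    using posdef_comb[of X Y u v] X Y u by simp
qed

lemma convex_form:
  fixes f :: "complex^'n^'n \<Rightarrow> real" and U :: "complex^'n^'n"
  assumes U: "unitary U" and q: "\<forall>k. q k \<ge> 0" and Q: "Q = U ** cdiag q ** cadj U"
    and f: "\<forall>X\<in>density_pd. f X = K - Re (trace (Q ** mlog X))"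
  shows "convex_on density_pd f"
  unfolding convex_on_def
proof (intro conjI convex_density_pd ballI allI impI)
  fix X Y :: "complex^'n^'n" and u v :: real
  assume X: "X \<in> density_pd" and Y: "Y \<in> density_pd" and u: "0 \<le> u" "0 \<le> v" "u + v = 1"
  have Z: "u *\<^sub>R X + v *\<^sub>R Y \<in> density_pd"
    using convex_density_pd X Y u unfolding convex_def by blast
  have "u * Re (trace (Q ** mlog X)) + v * Re (trace (Q ** mlog Y))
           \<le> Re (trace (Q ** mlog (u *\<^sub>R X + v *\<^sub>R Y)))"
    using X Y Z by (intro concave_trace_log[OF U q Q _ _ u]) (auto simp: density_pd_def)
  moreover have "u * K + v * K = K" using u by (metis distrib_right mult_1)
  moreover have fX: "f X = K - Re (trace (Q ** mlog X))" using f X by blast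
  moreover have fY: "f Y = K - Re (trace (Q ** mlog Y))" using f Y by blast
  moreover have fZ: "f (u *\<^sub>R X + v *\<^sub>R Y) = K - Re (trace (Q ** mlog (u *\<^sub>R X + v *\<^sub>R Y)))"
    using f Z by blast
  moreover have "u * f X + v * f Y = (u * K + v * K) - (u * Re (trace (Q ** mlog X)) + v * Re (trace (Q ** mlog Y)))"
    unfolding fX fY by (simp add: algebra_simps)
  ultimately show "f (u *\<^sub>R X + v *\<^sub>R Y) \<le> u * f X + v * f Y"
    by linarith
qed

lemma matrix_sub_ldistrib': "A ** (B - C) = A ** B - A ** (C::complex^'n^'n)"
  by (simp add: vec_eq_iff matrix_matrix_mult_def sum_subtractf right_diff_distrib)

lemma matrix_sub_rdistrib': "(B - C) ** A = B ** A - C ** (A::complex^'n^'n)"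
  by (simp add: vec_eq_iff matrix_matrix_mult_def sum_subtractf left_diff_distrib)

lemma trace_mat_mult: "trace (mat z ** L) = z * trace (L::complex^'n^'n)"
  by (simp add: mat_mult_left trace_def sum_distrib_left)

lemma cdiag_diff: "cdiag a - cdiag b = cdiag (\<lambda>j. a j - b j)"
  by (simp add: vec_eq_iff cdiag_def)

lemma conj_diff: "U ** A ** cadj U - U ** B ** cadj U = U ** (A - B) ** cadj (U::complex^'n^'n)"
  by (simp add: matrix_sub_ldistrib' matrix_sub_rdistrib')

theorem mainTheorem10:
  fixes \<rho> :: "complex^'n^'n"
  assumes "density \<rho>"
  shows "rel_smooth density_pd (lambda_max \<rho>) (qrel_entropy \<rho>) neg_logdet
       \<and> rel_strongly_convex density_pd (lambda_min \<rho>) (qrel_entropy \<rho>) neg_logdet"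
proof -
  have psd: "psd \<rho>" using assms by (simp add: density_def)
  obtain U d where U: "unitary U" and d: "\<forall>i. d i \<ge> 0" and R: "\<rho> = U ** cdiag d ** cadj U"
    using psd_mlog[OF psd] by blast
  have ev: "real_eigenvalues \<rho> = range d" by (rule eigenvalues_decomp[OF U R])
  have fin: "finite (range d)" by simp
  have dmax: "d i \<le> lambda_max \<rho>" for i
    unfolding lambda_max_def ev using fin by (intro Max_ge) auto
  have dmin: "lambda_min \<rho> \<le> d i" for i
    unfolding lambda_min_def ev using fin by (intro Min_le) auto
  define K where "K = Re (trace (\<rho> ** mlog \<rho>))"
  have qrel: "qrel_entropy \<rho> X = K - Re (trace (\<rho> ** mlog X))" for X
    by (simp add: qrel_entropy_def K_def matrix_sub_ldistrib' trace_sub)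
  have Qc: "mat (complex_of_real c) = U ** cdiag (\<lambda>j. c) ** cadj U" for c
    using mat_conj[OF U] by (simp add: cdiag_const)
  have smooth: "rel_smooth density_pd (lambda_max \<rho>) (qrel_entropy \<rho>) neg_logdet"
    unfolding rel_smooth_def
  proof (rule convex_form[OF U])
    let ?c = "lambda_max \<rho>"
    show "\<forall>k. ?c - d k \<ge> 0" using dmax by simp
    show "mat (complex_of_real ?c) - \<rho> = U ** cdiag (\<lambda>k. ?c - d k) ** cadj U"
      by (simp add: R Qc conj_diff cdiag_diff)
    show "\<forall>X\<in>density_pd. ?c * neg_logdet X - qrel_entropy \<rho> X =
           (- K) - Re (trace ((mat (complex_of_real ?c) - \<rho>) ** mlog X))"
    proof
      fix X :: "complex^'n^'n" assume "X \<in> density_pd"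
      then have "posdef X" by (simp add: density_pd_def)
      then show "?c * neg_logdet X - qrel_entropy \<rho> X =
           (- K) - Re (trace ((mat (complex_of_real ?c) - \<rho>) ** mlog X))"
        by (simp add: neg_logdet_posdef qrel matrix_sub_rdistrib' trace_sub trace_mat_mult)
    qed
  qed
  have strong: "rel_strongly_convex density_pd (lambda_min \<rho>) (qrel_entropy \<rho>) neg_logdet"
    unfolding rel_strongly_convex_def
  proof (rule convex_form[OF U])
    let ?c = "lambda_min \<rho>"
    show "\<forall>k. d k - ?c \<ge> 0" using dmin by simp
    show "\<rho> - mat (complex_of_real ?c) = U ** cdiag (\<lambda>k. d k - ?c) ** cadj U"
      by (simp add: R Qc conj_diff cdiag_diff)
    show "\<forall>X\<in>density_pd. qrel_entropy \<rho> X - ?c * neg_logdet X =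
           K - Re (trace ((\<rho> - mat (complex_of_real ?c)) ** mlog X))"
    proof
      fix X :: "complex^'n^'n" assume "X \<in> density_pd"
      then have "posdef X" by (simp add: density_pd_def)
      then show "qrel_entropy \<rho> X - ?c * neg_logdet X =
           K - Re (trace ((\<rho> - mat (complex_of_real ?c)) ** mlog X))"
        by (simp add: neg_logdet_posdef qrel matrix_sub_rdistrib' trace_sub trace_mat_mult)
    qed
  qed
  show ?thesis using smooth strong by blast
qed

end
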